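(* For every $c\in\mathbb{C}$, $r_{\mathrm{bif}}(c)\le\operatorname{dist}(c,\partial\mathcal{M})$, where $\operatorname{dist}$ is the Euclidean distance and $\mathcal{M}$ is the Mandelbrot set.
   Context: $f_c(z)=z^2+c$, extended to $\widehat{\mathbb{C}}$ by $f_c(\infty)=\infty$. $\mathcal{M}=\{c\in\mathbb{C}: f_c^{\circ n}(0)\not\to\infty\}$. For $c\in\mathbb{C}$, $r\ge0$, $G_{c,r}$ is the semigroup under composition generated by $\{f_{c'}:|c'-c|\le r\}$. A minimal set of a polynomial semigroup $G$ is a minimal element, with respect to inclusion, of the family of non-empty compact $L\subset\widehat{\mathbb{C}}$ with $g(L)\subset L$ for all $g\in G$; it is planar if $\infty\notin L$. The bifurcation radius $r_{\mathrm{bif}}(c)$ is the supremum of those $r\ge0$ for which $G_{c,r}$ has a planar minimal set (equivalently the infimum of those $r\ge0$ for which $G_{c,r}$ has no planar minimal set); by prior work this value is attained and $G_{c,r}$ has a planar minimal set iff $r\le r_{\mathrm{bif}}(c)$. *)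

theory Defs
  imports "HOL-Analysis.Analysis" "HOL-Library.Extended_Real"
begin

definition quad :: "complex \<Rightarrow> complex \<Rightarrow> complex" where
  "quad c z = z^2 + c"

definition mandelbrot :: "complex set" where
  "mandelbrot = {c. \<not> filterlim (\<lambda>n. (quad c ^^ n) 0) at_infinity sequentially}"

inductive_set gen_semigroup :: "('a \<Rightarrow> 'a) set \<Rightarrow> ('a \<Rightarrow> 'a) set"
  for F :: "('a \<Rightarrow> 'a) set" where
  gen: "f \<in> F \<Longrightarrow> f \<in> gen_semigroup F"
| comp: "g \<in> gen_semigroup F \<Longrightarrow> h \<in> gen_semigroup F \<Longrightarrow> g \<circ> h \<in> gen_semigroup F"

definition G_semigroup :: "complex \<Rightarrow> real \<Rightarrow> (complex \<Rightarrow> complex) set" where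
  "G_semigroup c r = gen_semigroup {quad c' | c'. cmod (c' - c) \<le> r}"

definition invariant_compact :: "(complex \<Rightarrow> complex) set \<Rightarrow> complex set \<Rightarrow> bool" where
  "invariant_compact G L \<longleftrightarrow> L \<noteq> {} \<and> compact L \<and> (\<forall>g\<in>G. g ` L \<subseteq> L)"

text \<open>Planar minimal set (a minimal set of the semigroup on the Riemann sphere not containing
  infinity).  Since every subset of a planar set avoids infinity, minimality among all
  compact invariant subsets of the sphere reduces to minimality among planar ones.\<close>
definition planar_minimal_set :: "(complex \<Rightarrow> complex) set \<Rightarrow> complex set \<Rightarrow> bool" where
  "planar_minimal_set G L \<longleftrightarrow> invariant_compact G L \<and>
     (\<forall>K. K \<subseteq> L \<and> invariant_compact G K \<longrightarrow> K = L)"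

definition r_bif :: "complex \<Rightarrow> ereal" where
  "r_bif c = Sup (ereal ` {r. r \<ge> 0 \<and> (\<exists>L. planar_minimal_set (G_semigroup c r) L)})"

end

theory Submission
  imports Defs "HOL-Complex_Analysis.Complex_Analysis"
begin


lemma quad_eq: "quad c = (\<lambda>z. z^2 + c)"
  by (rule ext) (simp add: quad_def)

lemma quad_holo: "quad c holomorphic_on S"
  unfolding quad_eq by (intro holomorphic_intros)

lemma funpow_quad_holo: "(quad c ^^ n) holomorphic_on S"
proof (induction n)
  case 0
  then show ?case by (simp add: holomorphic_on_id)
next
  case (Suc n)
  then show ?case using holomorphic_on_compose[OF Suc.IH quad_holo, of c] by (simp add: o_def)
qed

lemma quad_escape:
  assumes "R \<ge> 2" "norm c \<le> R" "norm z > R"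
  shows "norm (quad c z) > norm z"
proof -
  have "norm z ^ 2 - norm c \<le> norm (quad c z)"
    unfolding quad_def using norm_diff_ineq[of "z^2" c] by (simp add: norm_power)
  moreover have "norm z * norm z > 2 * norm z"
    using assms by (intro mult_strict_right_mono) auto
  ultimately show ?thesis using assms by (simp add: power2_eq_square)
qed

lemma funpow_escape:
  assumes "R \<ge> 2" "norm c \<le> R" "norm z > R"
  shows "norm ((quad c ^^ n) z) > R"
proof (induction n)
  case 0
  then show ?case using assms by simp
next
  case (Suc n)
  then show ?case using quad_escape[OF assms(1,2) Suc] by simp
qed

lemma three_not_in: "(3::complex) \<notin> mandelbrot"
proof -
  have "\<exists>x::real. (quad 3 ^^ n) 0 = of_real x \<and> real n \<le> x" for n
  proof (induction n)
    case 0
    then show ?case by (intro exI[of _ 0]) simp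
  next
    case (Suc n)
    then obtain x where x: "(quad 3 ^^ n) 0 = of_real x" "real n \<le> x" by auto
    have "x + 1 \<le> x^2 + 3"
    proof (cases "x \<le> 2")
      case True then show ?thesis using x by (simp add: add_increasing)
    next
      case False then have "x \<le> x * x" by (intro mult_le_cancel_left1[THEN iffD2]) auto
      then show ?thesis by (simp add: power2_eq_square)
    qed
    have "(quad 3 ^^ Suc n) 0 = quad 3 (of_real x)" using x(1) by simp
    also have "\<dots> = of_real (x^2+3)" by (simp add: quad_def)
    finally show ?case using x \<open>x + 1 \<le> x^2 + 3\<close> by (intro exI[of _ "x^2+3"]) simp
  qed
  hence "real n \<le> norm ((quad 3 ^^ n) 0)" for n
    by (metis norm_of_real abs_ge_self order_trans)
  hence "filterlim (\<lambda>n. norm ((quad 3 ^^ n) (0::complex))) at_top sequentially"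
    by (intro filterlim_at_top_mono[OF filterlim_real_sequentially]) auto
  thus ?thesis unfolding mandelbrot_def
    by (simp add: filterlim_at_infinity_conv_norm_at_top)
qed



lemma core:
  fixes c :: complex and e :: real and L :: "complex set"
  assumes e: "e > 0" and cL: "compact L" and ne: "L \<noteq> {}"
    and slack: "\<And>z y. z \<in> L \<Longrightarrow> dist y (quad c z) < e \<Longrightarrow> y \<in> L"
    and esc: "filterlim (\<lambda>n. (quad c ^^ n) 0) at_infinity sequentially"
  shows False
proof -
  define f where "f = quad c"
  have fL: "z \<in> L \<Longrightarrow> f z \<in> L" for z using slack[of z "f z"] e by (simp add: f_def)
  have fnL: "z \<in> L \<Longrightarrow> (f^^n) z \<in> L" for z n by (induction n) (auto simp: fL)
  obtain R where R: "R > 0" "\<And>z. z \<in> L \<Longrightarrow> norm z \<le> R"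
    using compact_imp_bounded[OF cL] unfolding bounded_pos by auto
  define R2 where "R2 = max R (max 2 (norm c))"
  have R2: "R2 \<ge> 2" "norm c \<le> R2" "R \<le> R2" unfolding R2_def by auto
  have orbit0: "(f^^j) 0 \<notin> L" for j
  proof
    assume j: "(f^^j) 0 \<in> L"
    have bnd: "norm ((f^^(n + j)) 0) \<le> R" for n
      using fnL[OF j, of n] R(2) by (simp add: funpow_add)
    from esc have "filterlim (\<lambda>n. norm ((f^^n) 0)) at_top sequentially"
      by (simp add: filterlim_at_infinity_conv_norm_at_top f_def)
    hence "eventually (\<lambda>n. R + 1 \<le> norm ((f^^n) 0)) sequentially"
      by (simp add: filterlim_at_top)
    then obtain N where "\<And>n. n \<ge> N \<Longrightarrow> R + 1 \<le> norm ((f^^n) 0)"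
      by (auto simp: eventually_sequentially)
    from this[of "N + j"] bnd[of N] show False by simp
  qed
  have Hbound: "norm z \<le> R2" if "(f^^n) z \<in> L" for n z
  proof (rule ccontr)
    assume "\<not> norm z \<le> R2"
    hence "norm ((f^^n) z) > R2" unfolding f_def by (intro funpow_escape R2) auto
    with R(2)[OF that] R2 show False by simp
  qed
  have branch: "\<exists>H. H holomorphic_on ball v e \<and> (\<forall>y\<in>ball v e. (f^^n) (H y) = y) \<and> H v = u"
    if bL: "ball v e \<subseteq> L" and uv: "(f^^n) u = v" for n u v
  proof -
    have "\<exists>G. G holomorphic_on ball v e \<and> (\<forall>y\<in>ball v e. (f^^k) (G y) = y) \<and> G v = (f^^(n-k)) u"
      if "k \<le> n" for k
      using that
    proof (induction k)
      case 0
      then show ?case using uv by (intro exI[of _ id]) (auto simp: holomorphic_on_id)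
    next
      case (Suc k)
      then obtain G where G: "G holomorphic_on ball v e" "\<And>y. y \<in> ball v e \<Longrightarrow> (f^^k) (G y) = y"
        "G v = (f^^(n-k)) u" by auto
      have nz: "G y - c \<noteq> 0" if y: "y \<in> ball v e" for y
      proof
        assume "G y - c = 0"
        hence "G y = f 0" by (simp add: f_def quad_def)
        hence "(f^^(Suc k)) 0 = y" using G(2)[OF y] by (simp add: funpow_Suc_right del: funpow.simps)
        with bL y orbit0[of "Suc k"] show False by auto
      qed
      obtain g where g: "g holomorphic_on ball v e" "\<And>y. y \<in> ball v e \<Longrightarrow> G y - c = g y ^ 2"
      proof -
        have hol: "(\<lambda>y. G y - c) holomorphic_on ball v e" by (intro holomorphic_intros G(1))
        show ?thesis
          using contractible_imp_holomorphic_sqrt[OF hol convex_imp_contractible[OF convex_ball] nz] that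
          by blast
      qed
      define a where "a = (f^^(n - Suc k)) u"
      have na: "n - k = Suc (n - Suc k)" using Suc.prems by simp
      have "f a = (f^^(n-k)) u" unfolding a_def na by simp
      hence Gv: "G v = a^2 + c" using G(3) by (simp add: f_def quad_def)
      have "g v ^ 2 = G v - c" using g(2)[of v] e by simp
      hence "g v ^ 2 = a ^ 2" using Gv by simp
      hence "g v = a \<or> g v = - a" by (simp add: power2_eq_iff)
      then obtain s :: complex where s: "s^2 = 1" "s * g v = a"
      proof
        assume "g v = a" then show ?thesis using that[of 1] by simp
      next
        assume "g v = -a" then show ?thesis using that[of "-1"] by simp
      qed
      define G' where "G' = (\<lambda>y. s * g y)"
      have fG': "f (G' y) = G y" if "y \<in> ball v e" for y
      proof -
        have "g y^2 = G y - c" using g(2)[OF that] by simp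
        then show ?thesis using s(1) by (simp add: G'_def f_def quad_def power_mult_distrib)
      qed
      show ?case
      proof (intro exI conjI ballI)
        show "G' holomorphic_on ball v e" unfolding G'_def by (intro holomorphic_intros g(1))
        show "(f ^^ Suc k) (G' y) = y" if "y \<in> ball v e" for y
          using fG'[OF that] G(2)[OF that] by (simp add: funpow_Suc_right del: funpow.simps)
        show "G' v = (f ^^ (n - Suc k)) u" using s(2) by (simp add: G'_def a_def)
      qed
    qed
    from this[of n] show ?thesis by simp
  qed
  have derivA: "norm (deriv (f^^n) u) \<ge> e / (2*R2)" if uL: "u \<in> L" and n1: "n \<ge> 1" for u n
  proof -
    define v where "v = (f^^n) u"
    have nn: "n = Suc (n - 1)" using n1 by simp
    have vf: "v = f ((f^^(n-1)) u)" unfolding v_def by (subst nn) simp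
    have bL: "ball v e \<subseteq> L"
    proof
      fix y assume "y \<in> ball v e"
      hence "dist y (quad c ((f^^(n-1)) u)) < e" using vf by (simp add: f_def dist_commute)
      thus "y \<in> L" by (rule slack[OF fnL[OF uL]])
    qed
    obtain H where H: "H holomorphic_on ball v e" "\<And>y. y \<in> ball v e \<Longrightarrow> (f^^n) (H y) = y" "H v = u"
      using branch[OF bL v_def[symmetric]] by blast
    have Hb: "norm (H y) \<le> R2" if "y \<in> ball v e" for y
      using Hbound[of n "H y"] H(2)[OF that] bL that by auto
    have e2: "e/2 > 0" using e by simp
    have cb: "cball v (e/2) \<subseteq> ball v e" using e by auto
    have "norm ((deriv ^^ 1) H v) \<le> fact 1 * R2 / (e/2)^1"
    proof (rule Cauchy_inequality)
      show "H holomorphic_on ball v (e/2)" using H(1) by (rule holomorphic_on_subset) (use e in auto)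
      show "continuous_on (cball v (e/2)) H"
        using holomorphic_on_imp_continuous_on[OF H(1)] cb by (rule continuous_on_subset)
      show "norm (H x) \<le> R2" if "norm (v - x) = e/2" for x
        using Hb[of x] that e by (simp add: dist_norm)
    qed (use e in auto)
    hence dHb: "norm (deriv H v) \<le> 2 * R2 / e" by (simp add: mult.commute)
    have dH: "(H has_field_derivative deriv H v) (at v)"
      using holomorphic_derivI[OF H(1) open_ball] e by simp
    have dF: "((f^^n) has_field_derivative deriv (f^^n) u) (at (H v))"
      using holomorphic_derivI[OF funpow_quad_holo[where c=c and n=n and S=UNIV] open_UNIV] H(3) by (simp add: f_def)
    have "((f^^n) \<circ> H has_field_derivative deriv (f^^n) u * deriv H v) (at v)"
      using DERIV_chain[OF dF dH] H(3) by simp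
    hence "((\<lambda>y. y) has_field_derivative deriv (f^^n) u * deriv H v) (at v)"
      by (rule has_field_derivative_transform_within_open[where S = "ball v e"]) (use e H(2) in auto)
    hence one: "deriv (f^^n) u * deriv H v = 1"
      using DERIV_ident DERIV_unique by blast
    hence "1 = norm (deriv (f^^n) u) * norm (deriv H v)" by (metis norm_mult norm_one)
    also have "\<dots> \<le> norm (deriv (f^^n) u) * (2 * R2 / e)"
      by (intro mult_left_mono dHb) auto
    finally have "1 \<le> norm (deriv (f^^n) u) * (2 * R2 / e)" .
    thus ?thesis using e R2 by (simp add: field_simps)
  qed
  obtain z0 where z0: "z0 \<in> L" using ne by auto
  define w where "w = f z0"
  have wL: "w \<in> L" using fL[OF z0] by (simp add: w_def)
  define \<Omega> where "\<Omega> = interior L"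
  have o\<Omega>: "open \<Omega>" by (simp add: \<Omega>_def)
  have \<Omega>L: "\<Omega> \<subseteq> L" by (simp add: \<Omega>_def interior_subset)
  have ball\<Omega>: "ball y e \<subseteq> \<Omega>" if "ball y e \<subseteq> L" for y
    using that by (simp add: \<Omega>_def interior_maximal)
  have slack_ball: "ball (f z) e \<subseteq> L" if "z \<in> L" for z
    using slack[OF that] by (auto simp: f_def dist_commute)
  define Le where "Le = {y. ball y e \<subseteq> L}"
  have Le_eq: "Le = (\<Inter>p\<in>-L. - ball p e)" unfolding Le_def by (auto simp: dist_commute)
  have cLe: "closed Le" unfolding Le_eq by (intro closed_INT ballI closed_Compl open_ball)
  have Le\<Omega>: "Le \<subseteq> \<Omega>"
  proof
    fix y assume "y \<in> Le"
    hence "ball y e \<subseteq> \<Omega>" using ball\<Omega> by (simp add: Le_def)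
    thus "y \<in> \<Omega>" using e by auto
  qed
  have fnLe: "(f^^n) z \<in> Le" if "z \<in> L" "n \<ge> 1" for z n
  proof -
    have nn: "n = Suc (n - 1)" using that by simp
    have "(f^^n) z = f ((f^^(n-1)) z)" by (subst nn) simp
    thus ?thesis using slack_ball[OF fnL[OF that(1)]] by (simp add: Le_def)
  qed
  have wB: "ball w e \<subseteq> \<Omega>" using ball\<Omega> slack_ball[OF z0] by (simp add: w_def)
  define \<H> where "\<H> = {h. h holomorphic_on \<Omega> \<and> (\<forall>z\<in>\<Omega>. norm (h z) \<le> R)}"
  have iterH: "f^^n \<in> \<H>" for n
    unfolding \<H>_def using funpow_quad_holo[where c=c and n=n and S=\<Omega>] \<Omega>L fnL R(2)
    by (auto simp: f_def)
  have Hhol: "\<And>h. h \<in> \<H> \<Longrightarrow> h holomorphic_on \<Omega>" by (simp add: \<H>_def)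
  have bndH: "\<exists>B. \<forall>h\<in>\<H>. \<forall>z\<in>K. norm (h z) \<le> B" if "compact K" "K \<subseteq> \<Omega>" for K
    using that by (auto simp: \<H>_def intro!: exI[of _ R])
  obtain \<phi> r where \<phi>: "\<phi> holomorphic_on \<Omega>" "strict_mono (r :: nat \<Rightarrow> nat)"
      "\<And>x. x \<in> \<Omega> \<Longrightarrow> ((\<lambda>k. (f^^(r k)) x) \<longlongrightarrow> \<phi> x) sequentially"
      "\<And>K. \<lbrakk>compact K; K \<subseteq> \<Omega>\<rbrakk> \<Longrightarrow> uniform_limit K ((\<lambda>n. f^^n) \<circ> r) \<phi> sequentially"
  proof (rule Montel[OF o\<Omega> Hhol bndH, of "\<lambda>n. f^^n"])
    show "range (\<lambda>n. f^^n) \<subseteq> \<H>" using iterH by auto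
  qed (auto intro: that)
  have r1: "r k \<ge> 1" if "k \<ge> 1" for k using seq_suble[OF \<phi>(2), of k] that by simp
  have \<phi>Le: "\<phi> x \<in> Le" if "x \<in> \<Omega>" for x
  proof (rule Lim_in_closed_set[OF cLe _ _ \<phi>(3)[OF that]])
    show "\<forall>\<^sub>F k in sequentially. (f ^^ r k) x \<in> Le"
      using that \<Omega>L r1 fnLe by (intro eventually_sequentiallyI[of 1]) auto
  qed auto
  define B where "B = ball w (e/2)"
  have "cball w (e/2) \<subseteq> ball w e" using e by auto
  hence cbw: "cball w (e/2) \<subseteq> \<Omega>" using wB by (rule order_trans)
  have B\<Omega>: "B \<subseteq> \<Omega>" using cbw B_def by auto
  obtain g' where g': "(\<phi> has_field_derivative g' w) (at w)"
      "((\<lambda>k. deriv (f^^(r k)) w) \<longlongrightarrow> g' w) sequentially"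
  proof -
    have "\<forall>\<^sub>F k in sequentially. continuous_on (cball w (e/2)) (((\<lambda>n. f^^n) \<circ> r) k) \<and>
          (\<forall>x\<in>ball w (e/2). ((((\<lambda>n. f^^n) \<circ> r) k) has_field_derivative deriv (f^^(r k)) x) (at x))"
    proof (intro always_eventually allI conjI ballI)
      fix k x
      show "continuous_on (cball w (e/2)) (((\<lambda>n. f^^n) \<circ> r) k)"
        using holomorphic_on_imp_continuous_on[OF funpow_quad_holo[where c=c and n="r k" and S="cball w (e/2)"]]
        by (simp add: f_def)
      show "(((\<lambda>n. f^^n) \<circ> r) k has_field_derivative deriv (f^^(r k)) x) (at x)"
        using holomorphic_derivI[OF funpow_quad_holo[where c=c and n="r k" and S=UNIV] open_UNIV]
        by (simp add: f_def)
    qed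
    from has_complex_derivative_uniform_limit[OF this \<phi>(4)[OF compact_cball cbw]] e
    obtain G' where "\<And>x. x \<in> ball w (e/2) \<Longrightarrow> (\<phi> has_field_derivative G' x) (at x) \<and>
         ((\<lambda>k. deriv (f^^(r k)) x) \<longlongrightarrow> G' x) sequentially"
      by auto
    from this[of w] e show ?thesis using that by auto
  qed
  have R2pos: "e / (2*R2) > 0" using e R2 by simp
  have g'low: "e / (2*R2) \<le> norm (g' w)"
  proof (rule tendsto_lowerbound[OF tendsto_norm[OF g'(2)]])
    show "\<forall>\<^sub>F k in sequentially. e / (2 * R2) \<le> norm (deriv (f ^^ r k) w)"
      using derivA[OF wL] r1 by (intro eventually_sequentiallyI[of 1]) auto
  qed auto
  have nonconst: "\<not> \<phi> constant_on B"
  proof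
    assume "\<phi> constant_on B"
    then obtain k where k: "\<And>x. x \<in> B \<Longrightarrow> \<phi> x = k" by (auto simp: constant_on_def)
    have "((\<lambda>x. k) has_field_derivative 0) (at w)" by (rule DERIV_const)
    hence "(\<phi> has_field_derivative 0) (at w)"
      by (rule has_field_derivative_transform_within_open[where S=B]) (use e k in \<open>auto simp: B_def\<close>)
    hence "g' w = 0" using g'(1) DERIV_unique by blast
    with g'low R2pos show False by simp
  qed
  have openO: "open (\<phi> ` B)"
    by (rule open_mapping_thm[OF holomorphic_on_subset[OF \<phi>(1) B\<Omega>]])
       (use nonconst in \<open>auto simp: B_def\<close>)
  define m where "m k = r (Suc k) - r k" for k
  have rm: "r (Suc k) = m k + r k" for k using strict_monoD[OF \<phi>(2), of k "Suc k"] by (simp add: m_def)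
  have m1: "m k \<ge> 1" for k using strict_monoD[OF \<phi>(2), of k "Suc k"] by (simp add: m_def)
  obtain \<psi> s where \<psi>: "\<psi> holomorphic_on \<Omega>" "strict_mono (s :: nat \<Rightarrow> nat)"
      "\<And>x. x \<in> \<Omega> \<Longrightarrow> ((\<lambda>k. (f^^(m (s k))) x) \<longlongrightarrow> \<psi> x) sequentially"
      "\<And>K. \<lbrakk>compact K; K \<subseteq> \<Omega>\<rbrakk> \<Longrightarrow> uniform_limit K ((\<lambda>n. f^^(m n)) \<circ> s) \<psi> sequentially"
  proof (rule Montel[OF o\<Omega> Hhol bndH, of "\<lambda>n. f^^(m n)"])
    show "range (\<lambda>n. f^^(m n)) \<subseteq> \<H>" using iterH by auto
  qed (auto intro: that)
  have \<psi>Le: "\<psi> x \<in> Le" if "x \<in> \<Omega>" for x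
  proof (rule Lim_in_closed_set[OF cLe _ _ \<psi>(3)[OF that]])
    show "\<forall>\<^sub>F k in sequentially. (f ^^ m (s k)) x \<in> Le"
      using that \<Omega>L m1 fnLe by (intro always_eventually allI) auto
  qed auto
  have fixpt: "\<psi> (\<phi> x) = \<phi> x" if xB: "x \<in> B" for x
  proof -
    have x\<Omega>: "x \<in> \<Omega>" using xB B\<Omega> by auto
    define p where "p = \<phi> x"
    have p\<Omega>: "p \<in> \<Omega>" using \<phi>Le[OF x\<Omega>] Le\<Omega> by (auto simp: p_def)
    define a where "a k = (f^^(r (s k))) x" for k
    have a_lim: "a \<longlonglongrightarrow> p"
      using LIMSEQ_subseq_LIMSEQ[OF \<phi>(3)[OF x\<Omega>] \<psi>(2)] by (simp add: a_def[abs_def] o_def p_def)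
    have smS: "strict_mono (\<lambda>k. Suc (s k))" using \<psi>(2) by (simp add: strict_mono_def)
    have b_lim: "(\<lambda>k. (f^^(r (Suc (s k)))) x) \<longlonglongrightarrow> p"
      using LIMSEQ_subseq_LIMSEQ[OF \<phi>(3)[OF x\<Omega>] smS] by (simp add: o_def p_def)
    have b_eq: "(f^^(r (Suc (s k)))) x = (f^^(m (s k))) (a k)" for k
      by (simp only: rm funpow_add comp_apply a_def)
    obtain \<rho> where \<rho>: "\<rho> > 0" "cball p \<rho> \<subseteq> \<Omega>" using o\<Omega> p\<Omega> open_contains_cball by blast
    have ulim: "uniform_limit (cball p \<rho>) ((\<lambda>n. f^^(m n)) \<circ> s) \<psi> sequentially"
      using \<psi>(4)[OF compact_cball \<rho>(2)] .
    have aev: "\<forall>\<^sub>F k in sequentially. a k \<in> cball p \<rho>"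
      using tendstoD[OF a_lim \<rho>(1)] by eventually_elim (simp add: dist_commute)
    have diff: "(\<lambda>k. (f^^(m (s k))) (a k) - \<psi> (a k)) \<longlonglongrightarrow> 0"
    proof (rule tendstoI)
      fix \<epsilon> :: real assume "\<epsilon> > 0"
      from uniform_limitD[OF ulim this] aev
      show "\<forall>\<^sub>F k in sequentially. dist ((f^^(m (s k))) (a k) - \<psi> (a k)) 0 < \<epsilon>"
        by eventually_elim (simp add: dist_norm)
    qed
    have aev2: "\<forall>\<^sub>F k in sequentially. a k \<in> \<Omega>"
      using aev by (rule eventually_mono) (use \<rho>(2) in blast)
    have psi_lim: "(\<lambda>k. \<psi> (a k)) \<longlonglongrightarrow> \<psi> p"
      by (rule continuous_on_tendsto_compose[OF holomorphic_on_imp_continuous_on[OF \<psi>(1)] a_lim p\<Omega> aev2])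
    have "(\<lambda>k. (f^^(m (s k))) (a k)) \<longlonglongrightarrow> \<psi> p"
      using tendsto_add[OF diff psi_lim] by simp
    hence "(\<lambda>k. (f^^(r (Suc (s k)))) x) \<longlonglongrightarrow> \<psi> p" by (simp only: b_eq)
    from LIMSEQ_unique[OF this b_lim] show ?thesis by (simp add: p_def)
  qed
  define z1 where "z1 = \<phi> w"
  have wB': "w \<in> B" using e by (simp add: B_def)
  have z1O: "z1 \<in> \<phi> ` B" using wB' by (simp add: z1_def)
  have z1\<Omega>: "z1 \<in> \<Omega>" using \<phi>Le[of w] Le\<Omega> B\<Omega> wB' by (auto simp: z1_def)
  define V where "V = connected_component_set \<Omega> z1"
  have oV: "open V" unfolding V_def by (rule open_connected_component[OF o\<Omega>])
  have cV: "connected V" unfolding V_def by (rule connected_connected_component)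
  have z1V: "z1 \<in> V" unfolding V_def using z1\<Omega> by simp
  have V\<Omega>: "V \<subseteq> \<Omega>" unfolding V_def by (rule connected_component_subset)
  have idV: "\<psi> y = y" if yV: "y \<in> V" for y
  proof -
    have "(\<lambda>y. \<psi> y - y) y = 0"
    proof (rule analytic_continuation[of "\<lambda>y. \<psi> y - y" V "\<phi> ` B \<inter> V" z1])
      show "(\<lambda>y. \<psi> y - y) holomorphic_on V"
        by (intro holomorphic_intros holomorphic_on_subset[OF \<psi>(1) V\<Omega>])
      show "z1 islimpt \<phi> ` B \<inter> V"
        by (rule interior_limit_point) (simp add: interior_open[OF openO] interior_open[OF oV] z1O z1V)
      show "(\<lambda>y. \<psi> y - y) z = 0" if "z \<in> \<phi> ` B \<inter> V" for z
        using that fixpt by auto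
    qed (use oV cV z1V yV in auto)
    thus ?thesis by simp
  qed
  have VLe: "V \<subseteq> Le"
  proof
    fix y assume "y \<in> V"
    thus "y \<in> Le" using \<psi>Le[of y] idV[of y] V\<Omega> by auto
  qed
  have Vball: "ball y e \<subseteq> V" if "y \<in> V" for y
  proof -
    have bL: "ball y e \<subseteq> \<Omega>" using ball\<Omega> VLe that by (auto simp: Le_def)
    have "ball y e \<subseteq> connected_component_set \<Omega> y"
      by (rule connected_component_maximal) (use e bL in auto)
    also have "\<dots> = V" unfolding V_def by (rule connected_component_eq) (use that V_def in simp)
    finally show ?thesis .
  qed
  have shift: "z1 + of_real (real k * (e/2)) \<in> V" for k
  proof (induction k)
    case 0
    then show ?case using z1V by simp
  next
    case (Suc k)
    have rk: "real (Suc k) * (e/2) = real k * (e/2) + e/2" by (simp add: algebra_simps)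
    have "z1 + of_real (real (Suc k) * (e/2)) = (z1 + of_real (real k * (e/2))) + of_real (e/2)"
      by (simp only: rk of_real_add add.assoc)
    moreover have gen: "Y + of_real (e/2) \<in> ball Y e" for Y :: complex
      using e by (simp add: dist_norm)
    ultimately have "z1 + of_real (real (Suc k) * (e/2)) \<in> ball (z1 + of_real (real k * (e/2))) e"
      by metis
    then show ?case using Vball[OF Suc] by auto
  qed
  obtain k :: nat where k: "(R + norm z1) / (e/2) < real k" using reals_Archimedean2 by blast
  define t where "t = real k * (e/2)"
  have t1: "t > R + norm z1" using k e by (simp add: t_def field_simps)
  have "z1 + of_real t \<in> L" using shift[of k] V\<Omega> \<Omega>L unfolding t_def by auto
  hence t2: "norm (z1 + of_real t) \<le> R" using R(2) by blast
  have "t \<ge> 0" using t1 R(1) norm_ge_zero[of z1] by linarith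
  hence t3: "norm (of_real t :: complex) = t" by simp
  have "norm ((z1 + of_real t) - z1) \<le> norm (z1 + of_real t) + norm z1" by (rule norm_triangle_ineq4)
  hence "t \<le> norm (z1 + of_real t) + norm z1" using t3 by simp
  with t1 t2 show False by simp
qed



theorem lemma4p9:
  fixes c :: complex
  shows "r_bif c \<le> ereal (infdist c (frontier mandelbrot))"
proof -
  define d where "d = infdist c (frontier mandelbrot)"
  have key: "r \<le> d" if r0: "r \<ge> 0" and pm: "planar_minimal_set (G_semigroup c r) L" for r L
  proof (rule ccontr)
    assume "\<not> r \<le> d"
    hence rd: "d < r" by simp
    have Lne: "L \<noteq> {}" and cL: "compact L" and inv: "\<And>g. g \<in> G_semigroup c r \<Longrightarrow> g ` L \<subseteq> L"
      using pm unfolding planar_minimal_set_def invariant_compact_def by auto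
    have invq: "quad c' ` L \<subseteq> L" if "cmod (c' - c) \<le> r" for c'
      using that by (intro inv) (auto simp: G_semigroup_def intro: gen_semigroup.gen)
    obtain c2 e where e: "e > 0" and c2M: "c2 \<notin> mandelbrot"
      and ce: "\<And>c'. dist c' c2 < e \<Longrightarrow> cmod (c' - c) \<le> r"
    proof (cases "frontier mandelbrot = {}")
      case True
      hence "mandelbrot = {} \<or> mandelbrot = UNIV" by (simp add: frontier_eq_empty)
      with three_not_in have "mandelbrot = {}" by auto
      moreover have "d = 0" using True by (simp add: d_def infdist_def)
      ultimately show ?thesis
        using that[of r c] rd by (auto simp: dist_norm)
    next
      case False
      obtain a where a: "a \<in> frontier mandelbrot" "d = dist c a"
        using infdist_attains_inf[OF frontier_closed False, of c] d_def by auto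
      have "a \<in> closure (- mandelbrot)"
        using a(1) by (metis frontier_complement frontier_def DiffD1)
      then obtain y where y: "y \<in> - mandelbrot" "dist y a < r - dist c a"
        using rd a(2) unfolding closure_approachable by (metis diff_gt_0_iff_gt)
      have "dist c y < r" using y(2) dist_triangle[of c y a] by (simp add: dist_commute)
      show ?thesis
      proof (rule that[of "r - dist c y" y])
        show "r - dist c y > 0" using \<open>dist c y < r\<close> by simp
        show "y \<notin> mandelbrot" using y(1) by simp
        show "cmod (c' - c) \<le> r" if "dist c' y < r - dist c y" for c'
          using that dist_triangle[of c' c y] by (simp add: dist_norm norm_minus_commute)
      qed
    qed
    show False
    proof (rule core[OF e cL Lne _ ])
      show "filterlim (\<lambda>n. (quad c2 ^^ n) 0) at_infinity sequentially"
        using c2M by (simp add: mandelbrot_def)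
      fix z y assume z: "z \<in> L" and y: "dist y (quad c2 z) < e"
      define c' where "c' = c2 + (y - quad c2 z)"
      have "dist c' c2 < e" using y by (simp add: c'_def dist_norm)
      hence "quad c' ` L \<subseteq> L" using ce invq by blast
      moreover have "quad c' z = y" by (simp add: c'_def quad_def)
      ultimately show "y \<in> L" using z by blast
    qed
  qed
  show ?thesis
    unfolding r_bif_def d_def[symmetric]
    by (rule Sup_least) (auto intro: key)
qed

end
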